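(* (Selection theorem.) Let $S\colon[0,1]\to\mathfrak S_1(\mathbb T)$ be a continuous path with $S(0)=\mathbf 1$. Then there exists a sequence of continuous functions $z_j\colon[0,1]\to\mathbb T$, $j=1,2,\dots$, such that $z_j(0)=1$ for all $j$ and, for every $r\in[0,1]$, the sequence $(z_1(r),z_2(r),\dots)$ is an enumeration of $S(r)$.
   Context: A rigged subset $S$ of a set $X$ assigns to each $x\in X$ a multiplicity $\mathrm{mult}(x;S)\in\{0,1,2,\dots,\infty\}$; an enumeration of a countable rigged set is a sequence in which each $x$ appears exactly $\mathrm{mult}(x;S)$ times. For a metric space $X$ with base point $x_0$, $\mathfrak S_\infty(X)$ is the set of countable rigged subsets of $X$ in which $x_0$ has multiplicity $\infty$ and which have no accumulation point other than $x_0$ (an accumulation point being a point every neighbourhood of which contains infinitely many elements counting multiplicity). For $S,T\in\mathfrak S_\infty(X)$, $d(S,T)=\inf\sum_{j}\mathrm{dist}(s_j,t_j)$ over all enumerations $(s_j)$, $(t_j)$ of $S$ and $T$. $\mathbf x_0$ denotes the rigged set consisting only of $x_0$ with infinite multiplicity, and $\mathfrak S_1(X)=\{S\in\mathfrak S_\infty(X):d(S,\mathbf x_0)<\infty\}$, a metric space with metric $d$. Here $X=\mathbb T$ (unit circle, arc-length metric) with base point $1$, so $\mathbf 1$ is the rigged set with only the point $1$ of infinite multiplicity. *)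

theory Defs
  imports "HOL-Analysis.Analysis"
begin

definition circle :: "complex set" where
  "circle = {z. cmod z = 1}"

definition arcdist :: "complex \<Rightarrow> complex \<Rightarrow> real" where
  "arcdist z w = \<bar>Arg (z / w)\<bar>"

text \<open>A rigged subset of the circle is represented by its multiplicity function.\<close>
type_synonym rigged = "complex \<Rightarrow> enat"

definition occ :: "(nat \<Rightarrow> complex) \<Rightarrow> complex \<Rightarrow> enat" where
  "occ s x = (if finite {j. s j = x} then enat (card {j. s j = x}) else \<infinity>)"

definition enumeration :: "rigged \<Rightarrow> (nat \<Rightarrow> complex) \<Rightarrow> bool" where
  "enumeration S s \<longleftrightarrow> (\<forall>x. occ s x = S x)"

definition accum_point :: "rigged \<Rightarrow> complex \<Rightarrow> bool" where
  "accum_point S x \<longleftrightarrow> x \<in> circle \<and>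
     (\<forall>e>0. infinite {y \<in> circle. arcdist x y < e \<and> S y \<noteq> 0}
            \<or> (\<exists>y \<in> circle. arcdist x y < e \<and> S y = \<infinity>))"

definition S_inf :: "rigged set" where
  "S_inf = {S. (\<forall>x. x \<notin> circle \<longrightarrow> S x = 0) \<and> countable {x. S x \<noteq> 0}
              \<and> S 1 = \<infinity> \<and> (\<forall>x. accum_point S x \<longrightarrow> x = 1)}"

definition rdist :: "rigged \<Rightarrow> rigged \<Rightarrow> ennreal" where
  "rdist S T = (INF st \<in> {(s, t). enumeration S s \<and> enumeration T t}.
                  (\<Sum>j. ennreal (arcdist (fst st j) (snd st j))))"

definition one_rigged :: rigged where
  "one_rigged = (\<lambda>x. if x = 1 then \<infinity> else 0)"

definition S_one :: "rigged set" where
  "S_one = {S \<in> S_inf. rdist S one_rigged < \<infinity>}"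

end

theory Submission
  imports Defs
begin


definition th :: "complex \<Rightarrow> real" where "th x = Arg (- x) + pi"

lemma th_pos: "0 < th x" and th_le: "th x \<le> 2*pi"
  using mpi_less_Arg[of "-x"] Arg_le_pi[of "-x"] by (auto simp: th_def)

lemma exp_circle: "exp (\<i> * complex_of_real a) \<in> circle"
  by (simp add: circle_def)

lemma exp_th: assumes "x \<in> circle" shows "exp (\<i> * complex_of_real (th x)) = x"
proof -
  have n: "cmod (-x) = 1" using assms by (simp add: circle_def)
  have x0: "-x \<noteq> 0" using n by auto
  have "-x = exp (\<i> * complex_of_real (Arg (-x)))" using Arg_eq[OF x0] n by simp
  then have "exp (\<i> * complex_of_real (th x)) = - (- x)"
    by (simp add: th_def distrib_left exp_add exp_pi_i' algebra_simps)
  then show ?thesis by simp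
qed

lemma th_exp: assumes "0 < a" "a \<le> 2*pi" shows "th (exp (\<i> * complex_of_real a)) = a"
proof -
  have "- exp (\<i> * complex_of_real a) = exp (\<i> * complex_of_real (a - pi))"
    by (simp add: algebra_simps exp_diff exp_pi_i')
  moreover have "Arg (exp (\<i> * complex_of_real (a - pi))) = a - pi"
    using assms by (subst Arg_exp) auto
  ultimately show ?thesis by (simp add: th_def)
qed

lemma th_1: "th 1 = 2*pi"
proof -
  have "exp (\<i> * complex_of_real (2*pi)) = 1"
    by (metis exp_two_pi_i mult.commute mult.left_commute of_real_mult of_real_numeral)
  then show ?thesis using th_exp[of "2*pi"] by simp
qed

lemma th_inj: "x \<in> circle \<Longrightarrow> y \<in> circle \<Longrightarrow> th x = th y \<Longrightarrow> x = y"
  by (metis exp_th)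

lemma th_lt: assumes "x \<in> circle" "x \<noteq> 1" shows "th x < 2*pi"
  using th_le[of x] th_1 th_inj[OF assms(1), of 1] assms by (force simp: circle_def)

lemma exp_div: "exp (\<i> * complex_of_real a) / exp (\<i> * complex_of_real b) = exp (\<i> * complex_of_real (a - b))"
  by (simp add: exp_diff algebra_simps)

lemma Arg_exp_i: "\<exists>k::int. Arg (exp (\<i> * complex_of_real d)) = d - of_int k * (2*pi)"
  using Arg_exp_diff_2pi[of "\<i> * complex_of_real d"] by (metis Im_i_times Re_complex_of_real)

lemma abs_Arg_exp_le: "\<bar>Arg (exp (\<i> * complex_of_real d))\<bar> \<le> \<bar>d\<bar>"
proof -
  obtain k::int where k: "Arg (exp (\<i> * complex_of_real d)) = d - of_int k * (2*pi)"
    using Arg_exp_i by blast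
  have b: "-pi < d - of_int k * (2*pi)" "d - of_int k * (2*pi) \<le> pi"
    using mpi_less_Arg Arg_le_pi k by metis+
  show ?thesis
  proof (cases "k = 0")
    case True then show ?thesis using k by simp
  next
    case False
    then have "real_of_int k \<ge> 1 \<or> real_of_int k \<le> -1" by linarith
    moreover have "real_of_int k \<ge> 1 \<Longrightarrow> of_int k * (2*pi) \<ge> 1 * (2*pi)"
      by (rule mult_right_mono) auto
    moreover have "real_of_int k \<le> -1 \<Longrightarrow> of_int k * (2*pi) \<le> (-1) * (2*pi)"
      by (rule mult_right_mono) auto
    ultimately have "of_int k * (2*pi) \<ge> 2*pi \<or> of_int k * (2*pi) \<le> -2*pi" by auto
    moreover have "\<bar>Arg (exp (\<i> * complex_of_real d))\<bar> \<le> pi"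
      using mpi_less_Arg Arg_le_pi by (metis abs_le_iff less_eq_real_def minus_less_iff)
    ultimately show ?thesis using k b pi_gt_zero by linarith
  qed
qed

lemma arcdist_exp_le: "arcdist (exp (\<i> * complex_of_real a)) (exp (\<i> * complex_of_real b)) \<le> \<bar>a - b\<bar>"
  unfolding arcdist_def exp_div by (rule abs_Arg_exp_le)

lemma arcdist_th:
  assumes "x \<in> circle" "y \<in> circle" "arcdist x y < e" "e \<le> pi"
  shows "\<bar>th x - th y\<bar> < e \<or> \<bar>th x - th y - 2*pi\<bar> < e \<or> \<bar>th x - th y + 2*pi\<bar> < e"
proof -
  define d where "d = th x - th y"
  have "x / y = exp (\<i> * complex_of_real d)"
    unfolding d_def exp_div[symmetric] using exp_th assms by simp
  then have a: "\<bar>Arg (exp (\<i> * complex_of_real d))\<bar> < e" using assms(3) by (simp add: arcdist_def)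
  obtain k::int where k: "Arg (exp (\<i> * complex_of_real d)) = d - of_int k * (2*pi)"
    using Arg_exp_i by blast
  have db: "-2*pi < d" "d < 2*pi" using th_pos th_le d_def by (smt (verit))+
  have "k = 0 \<or> k = 1 \<or> k = -1 \<or> real_of_int k \<ge> 2 \<or> real_of_int k \<le> -2" by linarith
  moreover have "real_of_int k \<ge> 2 \<Longrightarrow> of_int k * (2*pi) \<ge> 2 * (2*pi)"
    by (rule mult_right_mono) auto
  moreover have "real_of_int k \<le> -2 \<Longrightarrow> of_int k * (2*pi) \<le> (-2) * (2*pi)"
    by (rule mult_right_mono) auto
  ultimately have "\<bar>d\<bar> < e \<or> \<bar>d - 2*pi\<bar> < e \<or> \<bar>d + 2*pi\<bar> < e"
  proof (elim disjE)
    assume "k = 1" then show ?thesis using a k by simp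
  next
    assume "k = -1" then show ?thesis using a k by simp
  next
    assume "k = 0" then show ?thesis using a k by simp
  qed (use a k db assms(4) pi_gt_zero in linarith)+
  then show ?thesis unfolding d_def .
qed



definition ecard :: "'a set \<Rightarrow> enat" where
  "ecard A = (if finite A then enat (card A) else \<infinity>)"

definition ecnt :: "rigged \<Rightarrow> complex set \<Rightarrow> enat" where
  "ecnt S A = (if finite {x\<in>A. S x \<noteq> 0} then (\<Sum>x\<in>{x\<in>A. S x \<noteq> 0}. S x) else \<infinity>)"

lemma ecard_Un_disjoint: "A \<inter> B = {} \<Longrightarrow> ecard (A \<union> B) = ecard A + ecard B"
  by (auto simp: ecard_def card_Un_disjoint)

lemma ecard_mono: "A \<subseteq> B \<Longrightarrow> ecard A \<le> ecard B"
  by (auto simp: ecard_def card_mono dest: finite_subset)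

lemma occ_ecard: "occ s x = ecard {j. s j = x}"
  by (simp add: occ_def ecard_def)

lemma occ_nz: "occ s x \<noteq> 0 \<longleftrightarrow> (\<exists>j. s j = x)"
  by (auto simp: occ_def zero_enat_def dest: not_finite_existsD)

lemma ecard_finite_sum: "finite P \<Longrightarrow> ecard {j. s j \<in> P} = (\<Sum>x\<in>P. occ s x)"
proof (induction P rule: finite_induct)
  case empty then show ?case by (simp add: ecard_def zero_enat_def)
next
  case (insert x P)
  have "{j. s j \<in> insert x P} = {j. s j = x} \<union> {j. s j \<in> P}" by auto
  moreover have "{j. s j = x} \<inter> {j. s j \<in> P} = {}" using insert by auto
  ultimately show ?case using insert by (simp add: ecard_Un_disjoint occ_ecard)
qed

lemma enum_ecard:
  assumes "enumeration S s"
  shows "ecard {j. s j \<in> A} = ecnt S A"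
proof -
  define P where "P = {x\<in>A. S x \<noteq> 0}"
  have occ: "occ s x = S x" for x using assms by (simp add: enumeration_def)
  have hit: "S (s j) \<noteq> 0" for j
  proof -
    have "j \<in> {i. s i = s j}" by simp
    then have "{i. s i = s j} \<noteq> {}" by blast
    then have "occ s (s j) \<noteq> 0" by (auto simp: occ_ecard ecard_def zero_enat_def)
    then show ?thesis using occ by simp
  qed
  have eq: "{j. s j \<in> A} = {j. s j \<in> P}" using hit by (auto simp: P_def)
  show ?thesis
  proof (cases "finite P")
    case True
    then show ?thesis using eq ecard_finite_sum[OF True, of s] by (simp add: ecnt_def P_def[symmetric] occ)
  next
    case False
    have "P \<subseteq> s ` {j. s j \<in> P}"
    proof
      fix x assume x: "x \<in> P"
      then have "occ s x \<noteq> 0" using occ by (simp add: P_def)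
      then have "{j. s j = x} \<noteq> {}" by (auto simp: occ_nz)
      then show "x \<in> s ` {j. s j \<in> P}" using x by auto
    qed
    then have "infinite {j. s j \<in> P}" using False finite_surj by blast
    then show ?thesis using False eq by (simp add: ecard_def ecnt_def P_def)
  qed
qed

lemma enum_hit: "enumeration S s \<Longrightarrow> S (s j) \<noteq> 0"
proof -
  assume e: "enumeration S s"
  have "{i. s i = s j} \<noteq> {}" by blast
  then have "occ s (s j) \<noteq> 0" by (auto simp: occ_ecard ecard_def zero_enat_def)
  then show ?thesis using e by (simp add: enumeration_def)
qed

definition close :: "rigged \<Rightarrow> rigged \<Rightarrow> real \<Rightarrow> bool" where
  "close S T e \<longleftrightarrow> (\<exists>s t. enumeration S s \<and> enumeration T t \<and> (\<forall>j. arcdist (s j) (t j) < e))"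

lemma arcdist_nonneg: "0 \<le> arcdist x y" by (simp add: arcdist_def)

lemma rdist_close: assumes "rdist S T < ennreal e" shows "close S T e"
proof -
  obtain st where st: "st \<in> {(s, t). enumeration S s \<and> enumeration T t}"
    and lt: "(\<Sum>j. ennreal (arcdist (fst st j) (snd st j))) < ennreal e"
    using assms unfolding rdist_def INF_less_iff by blast
  have "arcdist (fst st j) (snd st j) < e" for j
    using ennreal_suminf_lessD[OF lt, of j] arcdist_nonneg ennreal_less_iff by blast
  then show ?thesis using st unfolding close_def by (cases st) auto
qed

lemma arcdist_sym: "arcdist x y = arcdist y x"
proof -
  have a: "\<bar>Arg (inverse z)\<bar> = \<bar>Arg z\<bar>" for z by (simp add: Arg_inverse)
  have "y / x = inverse (x / y)" by simp
  then show ?thesis unfolding arcdist_def using a by metis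
qed

lemma close_sym: "close S T e \<Longrightarrow> close T S e"
  unfolding close_def by (metis arcdist_sym)

lemma arcdist_cnj: "arcdist (cnj x) (cnj y) = arcdist x y"
proof -
  have a: "\<bar>Arg (cnj z)\<bar> = \<bar>Arg z\<bar>" for z by (simp add: Arg_cnj)
  have "cnj x / cnj y = cnj (x / y)" by simp
  then show ?thesis unfolding arcdist_def using a by metis
qed

lemma occ_comp_cnj: "occ (\<lambda>j. cnj (s j)) x = occ s (cnj x)"
proof -
  have "{j. cnj (s j) = x} = {j. s j = cnj x}" by (auto simp: complex_eq_iff)
  then show ?thesis by (simp add: occ_ecard)
qed

lemma enum_cnj: "enumeration S s \<Longrightarrow> enumeration (\<lambda>x. S (cnj x)) (\<lambda>j. cnj (s j))"
  by (simp add: enumeration_def occ_comp_cnj)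

lemma close_cnj: "close S T e \<Longrightarrow> close (\<lambda>x. S (cnj x)) (\<lambda>x. T (cnj x)) e"
  unfolding close_def using enum_cnj arcdist_cnj by metis

lemma close_match:
  assumes "close S T e" "S x \<noteq> 0"
  shows "\<exists>y. T y \<noteq> 0 \<and> arcdist x y < e"
proof -
  obtain s t where st: "enumeration S s" "enumeration T t" "\<forall>j. arcdist (s j) (t j) < e"
    using assms(1) close_def by blast
  have "occ s x \<noteq> 0" using st(1) assms(2) by (simp add: enumeration_def)
  then obtain j where "s j = x" by (auto simp: occ_nz)
  then show ?thesis using st enum_hit by metis
qed



definition good :: "rigged \<Rightarrow> bool" where
  "good S \<longleftrightarrow> (\<forall>x. x \<notin> circle \<longrightarrow> S x = 0) \<and> S 1 = \<infinity> \<and> (\<forall>x. x \<noteq> 1 \<longrightarrow> S x \<noteq> \<infinity>) \<and>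
     (\<forall>a b. 0 < a \<longrightarrow> b < 2*pi \<longrightarrow> finite {x \<in> circle. S x \<noteq> 0 \<and> a \<le> th x \<and> th x \<le> b})"

lemma S_inf_good:
  assumes "S \<in> S_inf" shows "good S"
proof -
  have off: "\<forall>x. x \<notin> circle \<longrightarrow> S x = 0" and one: "S 1 = \<infinity>"
    and acc: "\<And>x. accum_point S x \<Longrightarrow> x = 1" using assms by (auto simp: S_inf_def)
  have inf: "S x \<noteq> \<infinity>" if "x \<noteq> 1" for x
  proof
    assume h: "S x = \<infinity>"
    then have "x \<in> circle" using off by force
    have "arcdist x x = 0" using \<open>x \<in> circle\<close> by (auto simp: arcdist_def circle_def)
    then have "accum_point S x" using h \<open>x \<in> circle\<close> unfolding accum_point_def by force
    then show False using acc that by blast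
  qed
  have fin: "finite {x \<in> circle. S x \<noteq> 0 \<and> a \<le> th x \<and> th x \<le> b}" if ab: "0 < a" "b < 2*pi" for a b
  proof (rule ccontr)
    define P where "P = {x \<in> circle. S x \<noteq> 0 \<and> a \<le> th x \<and> th x \<le> b}"
    assume "infinite {x \<in> circle. S x \<noteq> 0 \<and> a \<le> th x \<and> th x \<le> b}"
    then have iP: "infinite P" by (simp add: P_def)
    have "inj_on th P" by (auto simp: P_def inj_on_def th_inj)
    then have iT: "infinite (th ` P)" using iP finite_image_iff by blast
    have "th ` P \<subseteq> {a..b}" by (auto simp: P_def)
    then obtain p where p: "p \<in> {a..b}" "p islimpt (th ` P)"
      using compact_eq_Bolzano_Weierstrass[of "{a..b}"] iT by auto
    define x0 where "x0 = exp (\<i> * complex_of_real p)"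
    have "accum_point S x0"
      unfolding accum_point_def
    proof (intro conjI allI impI disjI1)
      show "x0 \<in> circle" by (simp add: x0_def exp_circle)
      fix e :: real assume e: "e > 0"
      define Q where "Q = {y \<in> P. th y \<in> ball p e}"
      have "th ` Q = th ` P \<inter> ball p e" by (auto simp: Q_def)
      then have "infinite (th ` Q)" using p(2) e islimpt_eq_infinite_ball by metis
      then have iQ: "infinite Q" by blast
      have "Q \<subseteq> {y \<in> circle. arcdist x0 y < e \<and> S y \<noteq> 0}"
      proof
        fix y assume y: "y \<in> Q"
        then have yc: "y \<in> circle" and ys: "S y \<noteq> 0" and yd: "dist p (th y) < e"
          by (auto simp: Q_def P_def)
        have "arcdist x0 y = arcdist (exp (\<i> * complex_of_real p)) (exp (\<i> * complex_of_real (th y)))"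
          using exp_th[OF yc] by (simp add: x0_def)
        also have "\<dots> \<le> \<bar>p - th y\<bar>" by (rule arcdist_exp_le)
        finally show "y \<in> {y \<in> circle. arcdist x0 y < e \<and> S y \<noteq> 0}"
          using yc ys yd by (simp add: dist_real_def)
      qed
      then show "infinite {y \<in> circle. arcdist x0 y < e \<and> S y \<noteq> 0}"
        using iQ finite_subset by blast
    qed
    then have "x0 = 1" by (rule acc)
    moreover have "th x0 = p" using p ab th_exp[of p] by (simp add: x0_def)
    ultimately show False using th_1 p ab by auto
  qed
  show ?thesis unfolding good_def using off one inf fin by blast
qed

lemma th_cnj:
  assumes "x \<in> circle" "x \<noteq> 1" shows "th (cnj x) = 2*pi - th x"
proof -
  have a: "0 < th x" "th x < 2*pi" using th_pos th_lt assms by auto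
  have "cnj x = cnj (exp (\<i> * complex_of_real (th x)))" using exp_th[OF assms(1)] by simp
  also have "\<dots> = exp (- (\<i> * complex_of_real (th x)))"
    by (simp add: exp_cnj)
  also have "\<dots> = exp (2*pi*\<i> + (- (\<i> * complex_of_real (th x))))"
    by (simp only: exp_add exp_two_pi_i) simp
  also have "2*pi*\<i> + (- (\<i> * complex_of_real (th x))) = \<i> * complex_of_real (2*pi - th x)"
    by (simp add: algebra_simps)
  finally show ?thesis using th_exp[of "2*pi - th x"] a by simp
qed

lemma cnj_circle: "x \<in> circle \<Longrightarrow> cnj x \<in> circle" by (simp add: circle_def)

lemma cnj_one_iff: "cnj x = 1 \<longleftrightarrow> x = 1" by (auto simp: complex_eq_iff)

lemma good_cnj:
  assumes "good S" shows "good (\<lambda>x. S (cnj x))"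
proof -
  have off: "\<forall>x. x \<notin> circle \<longrightarrow> S x = 0" and one: "S 1 = \<infinity>"
    and inf: "\<forall>x. x \<noteq> 1 \<longrightarrow> S x \<noteq> \<infinity>"
    and fin: "\<And>a b. 0 < a \<Longrightarrow> b < 2*pi \<Longrightarrow> finite {x \<in> circle. S x \<noteq> 0 \<and> a \<le> th x \<and> th x \<le> b}"
    using assms by (auto simp: good_def)
  have "finite {x \<in> circle. S (cnj x) \<noteq> 0 \<and> a \<le> th x \<and> th x \<le> b}" if ab: "0 < a" "b < 2*pi" for a b
  proof -
    have "{x \<in> circle. S (cnj x) \<noteq> 0 \<and> a \<le> th x \<and> th x \<le> b}
          \<subseteq> cnj ` {y \<in> circle. S y \<noteq> 0 \<and> 2*pi - b \<le> th y \<and> th y \<le> 2*pi - a}"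
    proof
      fix x assume x: "x \<in> {x \<in> circle. S (cnj x) \<noteq> 0 \<and> a \<le> th x \<and> th x \<le> b}"
      then have x1: "x \<noteq> 1" using th_1 ab by auto
      have "th (cnj x) = 2*pi - th x" using th_cnj x x1 by auto
      then show "x \<in> cnj ` {y \<in> circle. S y \<noteq> 0 \<and> 2*pi - b \<le> th y \<and> th y \<le> 2*pi - a}"
        using x cnj_circle by (auto intro!: image_eqI[of x cnj "cnj x"])
    qed
    moreover have "finite {y \<in> circle. S y \<noteq> 0 \<and> 2*pi - b \<le> th y \<and> th y \<le> 2*pi - a}"
      using fin ab by auto
    ultimately show ?thesis using finite_subset by blast
  qed
  moreover have "\<forall>x. x \<notin> circle \<longrightarrow> S (cnj x) = 0"
  proof (intro allI impI)
    fix x assume "x \<notin> circle"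
    then have "cnj x \<notin> circle" by (simp add: circle_def)
    then show "S (cnj x) = 0" using off by blast
  qed
  moreover have "\<forall>x. x \<noteq> 1 \<longrightarrow> S (cnj x) \<noteq> \<infinity>" using inf cnj_one_iff by blast
  ultimately show ?thesis unfolding good_def using one by simp
qed



definition osf :: "(real \<Rightarrow> enat) \<Rightarrow> real \<Rightarrow> real \<Rightarrow> bool" where
  "osf F c B \<longleftrightarrow> (\<forall>t t'. t \<le> t' \<longrightarrow> F t \<le> F t') \<and> F c = 0 \<and> F B = \<infinity> \<and>
     (\<forall>t. \<exists>\<eta>>0. \<forall>t'. t \<le> t' \<longrightarrow> t' < t + \<eta> \<longrightarrow> F t' \<le> F t)"

definition ost :: "(real \<Rightarrow> enat) \<Rightarrow> nat \<Rightarrow> real" where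
  "ost F k = Inf {t. enat k < F t}"

context
  fixes F c B assumes o: "osf F c B"
begin

lemma osf_mono: "t \<le> t' \<Longrightarrow> F t \<le> F t'" using o by (auto simp: osf_def)

lemma osf_bdd: "bdd_below {t. enat k < F t}"
proof (rule bdd_belowI[of _ c])
  fix t assume "t \<in> {t. enat k < F t}"
  then have "F t > 0" using le_less_trans[of 0 "enat k" "F t"] by (simp add: zero_enat_def)
  then show "c \<le> t" using o osf_mono[of t c] by (force simp: osf_def)
qed

lemma osf_ne: "{t. enat k < F t} \<noteq> {}"
  using o by (auto simp: osf_def intro!: exI[of _ B])

lemma ost_le: "enat k < F t \<Longrightarrow> ost F k \<le> t"
  unfolding ost_def by (rule cInf_lower) (auto intro: osf_bdd)

lemma ost_F: "enat k < F (ost F k)"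
proof (rule ccontr)
  define u where "u = ost F k"
  assume "\<not> enat k < F (ost F k)"
  then have Fu: "F u \<le> enat k" by (simp add: u_def not_less)
  obtain \<eta> where \<eta>: "\<eta> > 0" "\<And>t'. u \<le> t' \<Longrightarrow> t' < u + \<eta> \<Longrightarrow> F t' \<le> F u"
    using o unfolding osf_def by blast
  have "u + \<eta> \<le> Inf {t. enat k < F t}"
  proof (rule cInf_greatest)
    show "{t. enat k < F t} \<noteq> {}" by (rule osf_ne)
    fix t assume t: "t \<in> {t. enat k < F t}"
    then have "u \<le> t" using ost_le u_def by auto
    show "u + \<eta> \<le> t"
    proof (rule ccontr)
      assume "\<not> u + \<eta> \<le> t"
      then have "F t \<le> F u" using \<eta> \<open>u \<le> t\<close> by auto
      then show False using t Fu by auto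
    qed
  qed
  then show False using \<eta> by (simp add: u_def ost_def)
qed

lemma ost_iff: "ost F k \<le> t \<longleftrightarrow> enat k < F t"
  using ost_le ost_F osf_mono less_le_trans by blast

lemma ost_gt: "c < ost F k"
proof -
  obtain \<eta> where \<eta>: "\<eta> > 0" "\<And>t'. c \<le> t' \<Longrightarrow> t' < c + \<eta> \<Longrightarrow> F t' \<le> F c"
    using o unfolding osf_def by blast
  have Fc: "F c = 0" using o by (simp add: osf_def)
  have "c + \<eta> \<le> ost F k"
  proof (rule ccontr)
    assume "\<not> c + \<eta> \<le> ost F k"
    moreover have "c \<le> ost F k"
    proof (rule ccontr)
      assume "\<not> c \<le> ost F k"
      then have "F (ost F k) \<le> F c" using osf_mono by auto
      then show False using ost_F[of k] Fc by simp
    qed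
    ultimately have "F (ost F k) \<le> F c" using \<eta> by auto
    then show False using ost_F[of k] Fc by simp
  qed
  then show ?thesis using \<eta> by simp
qed

lemma ost_le_B: "ost F k \<le> B"
  using ost_le o by (auto simp: osf_def)

end

lemma ost_shift:
  assumes "osf F c B" "osf G c' B'" "\<And>t. G t \<le> F (t + e)"
  shows "ost F k \<le> ost G k + e"
proof -
  have "enat k < G (ost G k)" using ost_F[OF assms(2)] .
  also have "\<dots> \<le> F (ost G k + e)" by (rule assms(3))
  finally show ?thesis by (rule ost_le[OF assms(1)])
qed



lemma gap_right:
  fixes \<Theta> :: "real set"
  assumes "finite \<Theta>" "t < b"
  shows "\<exists>\<eta>>0. \<eta> \<le> b - t \<and> (\<forall>\<theta>\<in>\<Theta>. t < \<theta> \<longrightarrow> t + \<eta> \<le> \<theta>)"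
  using assms
proof (induction \<Theta> rule: finite_induct)
  case empty then show ?case by (intro exI[of _ "b - t"]) auto
next
  case (insert \<theta> \<Theta>)
  then obtain \<eta> where \<eta>: "\<eta> > 0" "\<eta> \<le> b - t" "\<forall>\<theta>\<in>\<Theta>. t < \<theta> \<longrightarrow> t + \<eta> \<le> \<theta>" by blast
  show ?case
  proof (cases "t < \<theta>")
    case True
    then show ?thesis using \<eta> by (intro exI[of _ "min \<eta> (\<theta> - t)"]) auto
  next
    case False
    then show ?thesis using \<eta> by (intro exI[of _ \<eta>]) auto
  qed
qed

lemma gap_left:
  fixes \<Theta> :: "real set"
  assumes "finite \<Theta>" "a < t"
  shows "\<exists>a'. a \<le> a' \<and> a' < t \<and> (\<forall>\<theta>\<in>\<Theta>. \<theta> < t \<longrightarrow> \<theta> \<le> a')"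
  using assms
proof (induction \<Theta> rule: finite_induct)
  case empty then show ?case by (intro exI[of _ a]) auto
next
  case (insert \<theta> \<Theta>)
  then obtain a' where a': "a \<le> a'" "a' < t" "\<forall>\<theta>\<in>\<Theta>. \<theta> < t \<longrightarrow> \<theta> \<le> a'" by blast
  show ?case
  proof (cases "\<theta> < t")
    case True
    then show ?thesis using a' by (intro exI[of _ "max a' \<theta>"]) auto
  next
    case False
    then show ?thesis using a' by (intro exI[of _ a']) auto
  qed
qed

lemma ecnt_mono: "A \<subseteq> B \<Longrightarrow> ecnt S A \<le> ecnt S B"
proof -
  assume AB: "A \<subseteq> B"
  show ?thesis
  proof (cases "finite {x\<in>B. S x \<noteq> 0}")
    case True
    moreover have sub: "{x\<in>A. S x \<noteq> 0} \<subseteq> {x\<in>B. S x \<noteq> 0}" using AB by auto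
    ultimately have "finite {x\<in>A. S x \<noteq> 0}" using finite_subset by blast
    then show ?thesis using True sub by (simp add: ecnt_def sum_mono2)
  next
    case False then show ?thesis by (simp add: ecnt_def)
  qed
qed

lemma ecnt_cong: "{x\<in>A. S x \<noteq> 0} = {x\<in>B. S x \<noteq> 0} \<Longrightarrow> ecnt S A = ecnt S B"
  by (simp add: ecnt_def)

lemma enat_sum_fin: "finite A \<Longrightarrow> (\<And>y. y \<in> A \<Longrightarrow> f y \<noteq> (\<infinity>::enat)) \<Longrightarrow> sum f A \<noteq> \<infinity>"
  by (induction A rule: finite_induct) (auto simp: plus_eq_infty_iff_enat)

definition Aset :: "real \<Rightarrow> real \<Rightarrow> complex set" where
  "Aset c t = {x \<in> circle. x \<noteq> 1 \<and> c < th x \<and> th x \<le> t}"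

definition UF :: "rigged \<Rightarrow> real \<Rightarrow> real \<Rightarrow> enat" where
  "UF S c t = (if t < 2*pi then ecnt S (Aset c t) else \<infinity>)"

lemma good_fin: "good S \<Longrightarrow> 0 < a \<Longrightarrow> b < 2*pi \<Longrightarrow> finite {x \<in> circle. S x \<noteq> 0 \<and> a \<le> th x \<and> th x \<le> b}"
  by (simp add: good_def)

lemma good_supp_fin:
  assumes "good S" "0 < c" "t < 2*pi"
  shows "finite {x \<in> Aset c t. S x \<noteq> 0}"
proof -
  have "{x \<in> Aset c t. S x \<noteq> 0} \<subseteq> {x \<in> circle. S x \<noteq> 0 \<and> c \<le> th x \<and> th x \<le> t}"
    by (auto simp: Aset_def)
  then show ?thesis using good_fin[OF assms] finite_subset by blast
qed

lemma UF_osf: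
  assumes g: "good S" and c: "0 < c" "c < 2*pi"
  shows "osf (UF S c) c (2*pi)"
  unfolding osf_def
proof (intro conjI allI impI)
  fix t t' :: real assume "t \<le> t'"
  then show "UF S c t \<le> UF S c t'"
    by (auto simp: UF_def Aset_def intro!: ecnt_mono)
next
  have "Aset c c = {}" by (auto simp: Aset_def)
  then show "UF S c c = 0" using c by (simp add: UF_def ecnt_def)
next
  show "UF S c (2*pi) = \<infinity>" by (simp add: UF_def)
next
  fix t :: real
  show "\<exists>\<eta>>0. \<forall>t'. t \<le> t' \<longrightarrow> t' < t + \<eta> \<longrightarrow> UF S c t' \<le> UF S c t"
  proof (cases "t < 2*pi")
    case False
    then show ?thesis by (intro exI[of _ 1]) (simp add: UF_def)
  next
    case True
    define m where "m = (t + 2*pi) / 2"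
    have m: "t < m" "m < 2*pi" using True by (auto simp: m_def)
    define P where "P = {x \<in> Aset c m. S x \<noteq> 0}"
    have fP: "finite P" unfolding P_def using good_supp_fin[OF g c(1) m(2)] .
    obtain \<eta> where \<eta>: "\<eta> > 0" "\<eta> \<le> m - t" "\<forall>\<theta>\<in>th ` P. t < \<theta> \<longrightarrow> t + \<eta> \<le> \<theta>"
      using gap_right[OF finite_imageI[OF fP] m(1)] by blast
    show ?thesis
    proof (intro exI[of _ \<eta>] conjI allI impI)
      show "\<eta> > 0" by fact
      fix t' assume t': "t \<le> t'" "t' < t + \<eta>"
      have "{x\<in>Aset c t'. S x \<noteq> 0} = {x\<in>Aset c t. S x \<noteq> 0}"
      proof (intro set_eqI iffI)
        fix x assume x: "x \<in> {x\<in>Aset c t'. S x \<noteq> 0}"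
        then have "x \<in> P" using t' \<eta> by (auto simp: P_def Aset_def)
        then have "t < th x \<longrightarrow> t + \<eta> \<le> th x" using \<eta>(3) by blast
        then show "x \<in> {x\<in>Aset c t. S x \<noteq> 0}" using x t' by (auto simp: Aset_def)
      next
        fix x assume "x \<in> {x\<in>Aset c t. S x \<noteq> 0}"
        then show "x \<in> {x\<in>Aset c t'. S x \<noteq> 0}" using t' by (auto simp: Aset_def)
      qed
      then show "UF S c t' \<le> UF S c t"
        using t' \<eta> m True by (simp add: UF_def ecnt_cong[of "Aset c t'" S "Aset c t"])
    qed
  qed
qed

definition zU :: "rigged \<Rightarrow> real \<Rightarrow> nat \<Rightarrow> complex" where
  "zU S c k = exp (\<i> * complex_of_real (ost (UF S c) k))"

lemma zU_occ:
  assumes g: "good S" and c: "0 < c" "c < 2*pi" and x: "x \<in> circle" "x \<noteq> 1"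
  shows "occ (zU S c) x = (if c < th x then S x else 0)"
proof -
  note o = UF_osf[OF g c]
  define a where "a = th x"
  have a: "0 < a" "a < 2*pi" using th_pos th_lt x by (auto simp: a_def)
  define u where "u k = ost (UF S c) k" for k
  have ub: "c < u k" "u k \<le> 2*pi" for k using ost_gt[OF o] ost_le_B[OF o] by (auto simp: u_def)
  have eqk: "{k. zU S c k = x} = {k. u k = a}"
  proof (intro set_eqI iffI; simp)
    fix k assume "zU S c k = x"
    then have "th (exp (\<i> * complex_of_real (u k))) = a" by (simp add: zU_def u_def a_def)
    then show "u k = a" using th_exp[of "u k"] ub[of k] c by simp
  next
    fix k assume "u k = a"
    then show "zU S c k = x" using exp_th[OF x(1)] by (simp add: zU_def u_def a_def)
  qed
  show ?thesis
  proof (cases "c < a")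
    case False
    then have "{k. u k = a} = {}" using ub by force
    then show ?thesis using False eqk by (simp add: occ_ecard ecard_def a_def zero_enat_def)
  next
    case True
    define P where "P = {y \<in> Aset c a. S y \<noteq> 0}"
    have fP: "finite P" unfolding P_def using good_supp_fin[OF g c(1) a(2)] .
    obtain a' where a': "c \<le> a'" "a' < a" "\<forall>\<theta>\<in>th ` (P - {x}). \<theta> < a \<longrightarrow> \<theta> \<le> a'"
      using gap_left[OF finite_imageI[OF finite_Diff[OF fP]] True] by blast
    have Pm: "th y \<le> a'" if "y \<in> P - {x}" for y
    proof -
      have "th y \<le> a" "y \<in> circle" using that by (auto simp: P_def Aset_def a_def)
      moreover have "th y \<noteq> a" using th_inj that x(1) \<open>y \<in> circle\<close> by (auto simp: a_def)
      ultimately show ?thesis using a' that by force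
    qed
    have supp: "{y\<in>Aset c t. S y \<noteq> 0} = P - {x}" if "a' \<le> t" "t < a" for t
    proof (intro set_eqI iffI)
      fix y assume "y \<in> {y\<in>Aset c t. S y \<noteq> 0}"
      then show "y \<in> P - {x}" using that by (auto simp: P_def Aset_def a_def)
    next
      fix y assume y: "y \<in> P - {x}"
      then show "y \<in> {y\<in>Aset c t. S y \<noteq> 0}" using Pm[OF y] that by (auto simp: P_def Aset_def)
    qed
    have fin_vals: "S y \<noteq> \<infinity>" if "y \<in> P" for y using that g by (auto simp: good_def P_def Aset_def)
    obtain m where m: "(\<Sum>y\<in>P - {x}. S y) = enat m"
      using enat_sum_fin[of "P - {x}" S] fin_vals fP by (metis DiffD1 enat.exhaust finite_Diff)
    obtain n where n: "S x = enat n" using g x by (metis enat.exhaust good_def)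
    have Fa': "UF S c t = enat m" if "a' \<le> t" "t < a" for t
      using supp[OF that] fP a that m by (simp add: UF_def ecnt_def)
    have xA: "x \<in> Aset c a" using x True by (simp add: Aset_def a_def)
    have "UF S c a = ecnt S (Aset c a)" using a by (simp add: UF_def)
    also have "\<dots> = (\<Sum>y\<in>P. S y)" using fP by (simp add: ecnt_def P_def)
    also have "\<dots> = enat (m + n)"
    proof (cases "S x = 0")
      case True
      then have "P = P - {x}" by (auto simp: P_def)
      then show ?thesis using m n True by (simp add: zero_enat_def)
    next
      case False
      then have "x \<in> P" using xA by (simp add: P_def)
      then show ?thesis using m n fP by (simp add: sum.remove)
    qed
    finally have Fa: "UF S c a = enat (m + n)" .
    have "{k. u k = a} = {m..<m+n}"
    proof (intro set_eqI iffI)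
      fix k assume k: "k \<in> {k. u k = a}"
      then have "enat k < UF S c a" using ost_iff[OF o, of k a] by (simp add: u_def)
      moreover have "\<not> enat k < UF S c a'" using ost_iff[OF o, of k a'] k a' by (simp add: u_def)
      ultimately show "k \<in> {m..<m+n}" using Fa Fa'[of a'] a' by simp
    next
      fix k assume k: "k \<in> {m..<m+n}"
      then have le: "u k \<le> a" using ost_iff[OF o, of k a] Fa by (simp add: u_def)
      have gt: "a' < u k" using ost_iff[OF o, of k a'] Fa'[of a'] a' k by (simp add: u_def)
      have "u k = a"
      proof (rule ccontr)
        assume "u k \<noteq> a"
        then have "UF S c (u k) = enat m" using Fa' le gt by simp
        then show False using ost_F[OF o, of k] k by (simp add: u_def)
      qed
      then show "k \<in> {k. u k = a}" by simp
    qed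
    then show ?thesis using eqk True n by (simp add: occ_ecard ecard_def a_def)
  qed
qed



lemma good_circle: "good S \<Longrightarrow> S x \<noteq> 0 \<Longrightarrow> x \<in> circle"
  by (auto simp: good_def)

lemma UF_transfer:
  assumes cl: "close T S e" and gT: "good T" and gS: "good S"
    and win: "\<forall>y\<in>circle. y \<noteq> 1 \<longrightarrow> \<bar>th y - c\<bar> < w \<longrightarrow> S y = 0"
    and e: "0 < e" "e \<le> w" and w: "w \<le> c" "c + w \<le> 2*pi" "w \<le> pi"
  shows "UF T c t \<le> UF S c (t + e)"
proof (cases "t + e < 2*pi")
  case False then show ?thesis by (simp add: UF_def)
next
  case True
  then have t: "t < 2*pi" using e by simp
  obtain s q where sq: "enumeration T s" "enumeration S q" "\<forall>j. arcdist (s j) (q j) < e"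
    using cl close_def by blast
  have "{j. s j \<in> Aset c t} \<subseteq> {j. q j \<in> Aset c (t + e)}"
  proof (intro subsetI CollectI)
    fix j assume "j \<in> {j. s j \<in> Aset c t}"
    then have sj: "s j \<in> circle" "c < th (s j)" "th (s j) \<le> t" by (auto simp: Aset_def)
    have qS: "S (q j) \<noteq> 0" using enum_hit[OF sq(2)] .
    then have qc: "q j \<in> circle" using good_circle[OF gS] by blast
    have "\<bar>th (s j) - th (q j)\<bar> < e \<or> \<bar>th (s j) - th (q j) - 2*pi\<bar> < e \<or> \<bar>th (s j) - th (q j) + 2*pi\<bar> < e"
      using arcdist_th[OF sj(1) qc sq(3)[rule_format, of j]] e w by linarith
    moreover have "th (q j) \<le> 2*pi" "0 < th (q j)" by (rule th_le, rule th_pos)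
    ultimately have d: "\<bar>th (s j) - th (q j)\<bar> < e" using sj t True e w by linarith
    then have lt: "th (q j) < 2*pi" using True sj by linarith
    then have q1: "q j \<noteq> 1" using th_1 by auto
    have "c < th (q j)"
    proof (rule ccontr)
      assume "\<not> c < th (q j)"
      then have "\<bar>th (q j) - c\<bar> < w" using d sj e by linarith
      then show False using win qc q1 qS by blast
    qed
    then show "q j \<in> Aset c (t + e)" using qc q1 d sj by (auto simp: Aset_def)
  qed
  then have "ecard {j. s j \<in> Aset c t} \<le> ecard {j. q j \<in> Aset c (t + e)}" by (rule ecard_mono)
  then show ?thesis using enum_ecard[OF sq(1)] enum_ecard[OF sq(2)] t True by (simp add: UF_def)
qed

lemma upper_cont:
  fixes S :: "real \<Rightarrow> rigged" and I :: "real set"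
  assumes g: "\<forall>r\<in>I. good (S r)"
    and win: "\<forall>r\<in>I. \<forall>y\<in>circle. y \<noteq> 1 \<longrightarrow> \<bar>th y - c\<bar> < w \<longrightarrow> S r y = 0"
    and cont: "\<forall>r\<in>I. \<forall>e>0. \<exists>\<delta>>0. \<forall>r'\<in>I. \<bar>r' - r\<bar> < \<delta> \<longrightarrow> close (S r') (S r) e"
    and w: "0 < w" "w \<le> c" "c + w \<le> 2*pi" "w \<le> pi"
  shows "continuous_on I (\<lambda>r. zU (S r) c k)"
proof -
  have c: "0 < c" "c < 2*pi" using w by auto
  have "continuous_on I (\<lambda>r. ost (UF (S r) c) k)"
    unfolding continuous_on_iff
  proof (intro ballI allI impI)
    fix r \<epsilon> :: real assume r: "r \<in> I" and \<epsilon>: "\<epsilon> > 0"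
    define e where "e = min (\<epsilon>/2) w"
    have e: "0 < e" "e \<le> w" "e < \<epsilon>" using \<epsilon> w by (auto simp: e_def)
    obtain \<delta> where \<delta>: "\<delta> > 0" "\<forall>r'\<in>I. \<bar>r' - r\<bar> < \<delta> \<longrightarrow> close (S r') (S r) e"
      using cont r e by blast
    show "\<exists>d>0. \<forall>r'\<in>I. dist r' r < d \<longrightarrow> dist (ost (UF (S r') c) k) (ost (UF (S r) c) k) < \<epsilon>"
    proof (intro exI[of _ \<delta>] conjI ballI impI)
      show "\<delta> > 0" by fact
      fix r' assume r': "r' \<in> I" "dist r' r < \<delta>"
      then have cl: "close (S r') (S r) e" using \<delta> by (simp add: dist_real_def)
      have o1: "osf (UF (S r) c) c (2*pi)" using UF_osf g r c by blast
      have o2: "osf (UF (S r') c) c (2*pi)" using UF_osf g r' c by blast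
      have "UF (S r') c t \<le> UF (S r) c (t + e)" for t
        using UF_transfer[OF cl] g win r r' e w by blast
      then have a: "ost (UF (S r) c) k \<le> ost (UF (S r') c) k + e" using ost_shift[OF o1 o2] by blast
      have "UF (S r) c t \<le> UF (S r') c (t + e)" for t
        using UF_transfer[OF close_sym[OF cl]] g win r r' e w by blast
      then have b: "ost (UF (S r') c) k \<le> ost (UF (S r) c) k + e" using ost_shift[OF o2 o1] by blast
      show "dist (ost (UF (S r') c) k) (ost (UF (S r) c) k) < \<epsilon>"
        using a b e by (simp add: dist_real_def abs_le_iff)
    qed
  qed
  then show ?thesis unfolding zU_def by (intro continuous_intros)
qed

definition il :: "(nat \<Rightarrow> complex) \<Rightarrow> (nat \<Rightarrow> complex) \<Rightarrow> nat \<Rightarrow> complex" where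
  "il a b j = (if even j then a (j div 2) else b (j div 2))"

lemma ecard_image: "inj_on f A \<Longrightarrow> ecard (f ` A) = ecard A"
  by (simp add: ecard_def card_image finite_image_iff)

lemma occ_il: "occ (il a b) x = occ a x + occ b x"
proof -
  have "{j. il a b j = x} = (\<lambda>k. 2*k) ` {k. a k = x} \<union> (\<lambda>k. 2*k+1) ` {k. b k = x}"
  proof (intro set_eqI iffI)
    fix j assume "j \<in> {j. il a b j = x}"
    then show "j \<in> (\<lambda>k. 2*k) ` {k. a k = x} \<union> (\<lambda>k. 2*k+1) ` {k. b k = x}"
      by (cases "even j") (auto simp: il_def elim!: evenE oddE)
  qed (auto simp: il_def)
  moreover have "(\<lambda>k. 2*k) ` {k. a k = x} \<inter> (\<lambda>k. 2*k+1) ` {k. b k = x} = {}" by auto presburger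
  moreover have "inj_on (\<lambda>k::nat. 2*k) A" "inj_on (\<lambda>k::nat. 2*k+1) A" for A by (auto simp: inj_on_def)
  ultimately show ?thesis by (simp add: occ_ecard ecard_Un_disjoint ecard_image)
qed

lemma occ_const1: "occ (\<lambda>_. 1) 1 = \<infinity>" by (simp add: occ_def)
lemma occ_const1': "x \<noteq> 1 \<Longrightarrow> occ (\<lambda>_. 1) x = 0" by (simp add: occ_def zero_enat_def)

lemma zU_circle: "zU S c k \<in> circle" by (simp add: zU_def exp_circle)

lemma occ_zU_off: "x \<notin> circle \<Longrightarrow> occ (zU S c) x = 0"
  using zU_circle by (metis occ_nz)

definition zfull :: "rigged \<Rightarrow> real \<Rightarrow> nat \<Rightarrow> complex" where
  "zfull S c = il (zU S c) (il (\<lambda>k. cnj (zU (\<lambda>y. S (cnj y)) (2*pi - c) k)) (\<lambda>_. 1))"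

lemma zfull_enum:
  assumes g: "good S" and c: "0 < c" "c < 2*pi"
    and win: "\<forall>y\<in>circle. y \<noteq> 1 \<longrightarrow> th y = c \<longrightarrow> S y = 0"
  shows "enumeration S (zfull S c)"
  unfolding enumeration_def
proof
  fix x
  have g': "good (\<lambda>y. S (cnj y))" using good_cnj[OF g] .
  have c': "0 < 2*pi - c" "2*pi - c < 2*pi" using c by auto
  have o: "occ (zfull S c) x = occ (zU S c) x + occ (zU (\<lambda>y. S (cnj y)) (2*pi - c)) (cnj x) + occ (\<lambda>_. 1) x"
    by (simp add: zfull_def occ_il occ_comp_cnj add.assoc)
  show "occ (zfull S c) x = S x"
  proof (cases "x = 1")
    case True then show ?thesis using o g occ_const1 by (simp add: good_def)
  next
    case x1: False
    show ?thesis
    proof (cases "x \<in> circle")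
      case False
      then have "cnj x \<notin> circle" by (simp add: circle_def)
      then show ?thesis using o False x1 g occ_const1' occ_zU_off by (simp add: good_def)
    next
      case xc: True
      have cx: "cnj x \<in> circle" "cnj x \<noteq> 1" using xc x1 cnj_circle cnj_one_iff by auto
      have "occ (zU S c) x = (if c < th x then S x else 0)" using zU_occ[OF g c xc x1] .
      moreover have "occ (zU (\<lambda>y. S (cnj y)) (2*pi - c)) (cnj x) = (if th x < c then S x else 0)"
        using zU_occ[OF g' c' cx] th_cnj[OF xc x1] by simp
      moreover have "th x = c \<Longrightarrow> S x = 0" using win xc x1 by blast
      ultimately show ?thesis using o occ_const1'[OF x1] by auto
    qed
  qed
qed

lemma local_family:
  fixes S :: "real \<Rightarrow> rigged" and I :: "real set"
  assumes g: "\<forall>r\<in>I. good (S r)"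
    and win: "\<forall>r\<in>I. \<forall>y\<in>circle. y \<noteq> 1 \<longrightarrow> \<bar>th y - c\<bar> < w \<longrightarrow> S r y = 0"
    and cont: "\<forall>r\<in>I. \<forall>e>0. \<exists>\<delta>>0. \<forall>r'\<in>I. \<bar>r' - r\<bar> < \<delta> \<longrightarrow> close (S r') (S r) e"
    and w: "0 < w" "w \<le> c" "c + w \<le> 2*pi" "w \<le> pi"
  shows "\<exists>z. (\<forall>j. continuous_on I (z j)) \<and> (\<forall>r\<in>I. enumeration (S r) (\<lambda>j. z j r))"
proof (intro exI[of _ "\<lambda>j r. zfull (S r) c j"] conjI allI ballI)
  fix r assume r: "r \<in> I"
  show "enumeration (S r) (\<lambda>j. zfull (S r) c j)"
    using zfull_enum[of "S r" c] g win r w by force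
next
  fix j
  define S' where "S' r = (\<lambda>y. S r (cnj y))" for r
  have g': "\<forall>r\<in>I. good (S' r)" using g good_cnj by (simp add: S'_def)
  have win': "\<forall>r\<in>I. \<forall>y\<in>circle. y \<noteq> 1 \<longrightarrow> \<bar>th y - (2*pi - c)\<bar> < w \<longrightarrow> S' r y = 0"
  proof (intro ballI impI)
    fix r y assume r: "r \<in> I" and y: "y \<in> circle" "y \<noteq> 1" and d: "\<bar>th y - (2*pi - c)\<bar> < w"
    have "th (cnj y) = 2*pi - th y" using th_cnj y by blast
    then have "\<bar>th (cnj y) - c\<bar> < w" using d by linarith
    then show "S' r y = 0" using win r y cnj_circle cnj_one_iff by (simp add: S'_def)
  qed
  have cont': "\<forall>r\<in>I. \<forall>e>0. \<exists>\<delta>>0. \<forall>r'\<in>I. \<bar>r' - r\<bar> < \<delta> \<longrightarrow> close (S' r') (S' r) e"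
    using cont close_cnj unfolding S'_def by metis
  have w': "0 < w" "w \<le> 2*pi - c" "(2*pi - c) + w \<le> 2*pi" "w \<le> pi" using w by auto
  have c1: "continuous_on I (\<lambda>r. zU (S r) c k)" for k using upper_cont[OF g win cont w] .
  have c2: "continuous_on I (\<lambda>r. zU (S' r) (2*pi - c) k)" for k using upper_cont[OF g' win' cont' w'] .
  show "continuous_on I (\<lambda>r. zfull (S r) c j)"
  proof (cases "even j")
    case True then show ?thesis using c1 by (simp add: zfull_def il_def)
  next
    case False
    then show ?thesis using c2 by (cases "even (j div 2)") (auto simp: zfull_def il_def S'_def intro!: continuous_intros)
  qed
qed



lemma ecard_bij:
  fixes A B :: "nat set"
  assumes "ecard A = ecard B" shows "\<exists>f. bij_betw f A B"
proof (cases "finite A")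
  case True
  then have "finite B" "card A = card B" using assms by (auto simp: ecard_def split: if_splits)
  then show ?thesis using True finite_same_card_bij by blast
next
  case False
  then have "infinite B" using assms by (auto simp: ecard_def split: if_splits)
  have "bij_betw (enumerate B \<circ> inv_into UNIV (enumerate A)) A B"
    by (rule bij_betw_trans[OF bij_betw_inv_into[OF bij_enumerate[OF False]] bij_enumerate[OF \<open>infinite B\<close>]])
  then show ?thesis by blast
qed

lemma enum_bij:
  assumes s: "enumeration T s" and t: "enumeration T t"
  shows "\<exists>p. bij p \<and> (\<forall>j. t (p j) = s j)"
proof -
  have "\<forall>x. \<exists>f. bij_betw f {j. s j = x} {j. t j = x}"
  proof
    fix x
    have "ecard {j. s j = x} = ecard {j. t j = x}"
      using s t by (simp add: enumeration_def occ_ecard[symmetric])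
    then show "\<exists>f. bij_betw f {j. s j = x} {j. t j = x}" by (rule ecard_bij)
  qed
  then obtain f where f: "\<And>x. bij_betw (f x) {j. s j = x} {j. t j = x}" by metis
  define p where "p j = f (s j) j" for j
  have tp: "t (p j) = s j" for j
  proof -
    have "f (s j) j \<in> {k. t k = s j}" using bij_betwE[OF f[of "s j"]] by simp
    then show ?thesis by (simp add: p_def)
  qed
  have "inj p"
  proof (rule injI)
    fix i j assume "p i = p j"
    then have "s i = s j" using tp by metis
    then have e: "f (s i) i = f (s i) j" using \<open>p i = p j\<close> by (simp add: p_def)
    have inj: "inj_on (f (s i)) {k. s k = s i}" using f bij_betw_def by blast
    have m: "i \<in> {k. s k = s i}" "j \<in> {k. s k = s i}" using \<open>s i = s j\<close> by simp_all
    show "i = j" by (rule inj_onD[OF inj e m])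
  qed
  moreover have "surj p"
  proof -
    have "k \<in> range p" for k
    proof -
      have "k \<in> {j. t j = t k}" by simp
      then have "k \<in> f (t k) ` {j. s j = t k}" using bij_betw_imp_surj_on[OF f[of "t k"]] by simp
      then obtain j where j: "s j = t k" "k = f (t k) j" by blast
      then have "p j = k" by (simp add: p_def)
      then show ?thesis by (metis rangeI)
    qed
    then show ?thesis by blast
  qed
  ultimately have "bij p" by (simp add: bij_def)
  then show ?thesis using tp by blast
qed

lemma occ_bij: "bij p \<Longrightarrow> occ (\<lambda>j. f (p j)) x = occ f x"
proof -
  assume b: "bij p"
  have "{j. f (p j) = x} = p -` {k. f k = x}" by auto
  moreover have "p ` (p -` {k. f k = x}) = {k. f k = x}" using b by (metis bij_def surj_image_vimage_eq)
  moreover have "inj_on p (p -` {k. f k = x})" using b by (metis bij_def inj_on_subset subset_UNIV)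
  ultimately have "ecard {j. f (p j) = x} = ecard {k. f k = x}"
    using ecard_image[of p "p -` {k. f k = x}"] by simp
  then show ?thesis by (simp add: occ_ecard)
qed

definition ENUM :: "(real \<Rightarrow> rigged) \<Rightarrow> real set \<Rightarrow> (nat \<Rightarrow> real \<Rightarrow> complex) \<Rightarrow> bool" where
  "ENUM S I z \<longleftrightarrow> (\<forall>j. continuous_on I (z j)) \<and> (\<forall>r\<in>I. enumeration (S r) (\<lambda>j. z j r))"

lemma glue:
  assumes z: "ENUM S {a..b} z" and w: "ENUM S {b..c} w" and ab: "a \<le> b" "b \<le> c"
  shows "\<exists>y. ENUM S {a..c} y"
proof -
  have e1: "enumeration (S b) (\<lambda>j. z j b)" using z ab by (simp add: ENUM_def)
  have e2: "enumeration (S b) (\<lambda>j. w j b)" using w ab by (simp add: ENUM_def)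
  obtain p where p: "bij p" "\<And>j. w (p j) b = z j b" using enum_bij[OF e1 e2] by blast
  define y where "y j r = (if r \<le> b then z j r else w (p j) r)" for j r
  have "continuous_on {a..c} (y j)" for j
    unfolding y_def
  proof (rule continuous_on_cases_le[where h = "\<lambda>r. r" and a = b])
    have "{x \<in> {a..c}. x \<le> b} = {a..b}" using ab by auto
    then show "continuous_on {x \<in> {a..c}. x \<le> b} (z j)" using z by (simp add: ENUM_def)
    have "{x \<in> {a..c}. b \<le> x} = {b..c}" using ab by auto
    then show "continuous_on {x \<in> {a..c}. b \<le> x} (w (p j))" using w by (simp add: ENUM_def)
    show "continuous_on {a..c} (\<lambda>r. r)" by (rule continuous_on_id)
    show "\<And>x. x \<in> {a..c} \<Longrightarrow> x = b \<Longrightarrow> z j x = w (p j) x" using p(2) by metis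
  qed
  moreover have "enumeration (S r) (\<lambda>j. y j r)" if r: "r \<in> {a..c}" for r
  proof (cases "r \<le> b")
    case True
    then show ?thesis using z r by (simp add: ENUM_def y_def)
  next
    case False
    then have "enumeration (S r) (\<lambda>j. w j r)" using w r by (simp add: ENUM_def)
    moreover have "(\<lambda>j. y j r) = (\<lambda>j. w (p j) r)" using False by (simp add: y_def)
    moreover have "occ (\<lambda>j. w (p j) r) x = occ (\<lambda>k. w k r) x" for x
      using occ_bij[OF p(1), of "\<lambda>k. w k r"] by simp
    ultimately show ?thesis by (simp add: enumeration_def)
  qed
  ultimately show ?thesis unfolding ENUM_def by blast
qed

lemma gap_mid:
  fixes \<Theta> :: "real set"
  assumes "finite \<Theta>" "c \<notin> \<Theta>"
  shows "\<exists>\<rho>>0. \<forall>\<theta>\<in>\<Theta>. \<rho> \<le> \<bar>\<theta> - c\<bar>"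
  using assms
proof (induction \<Theta> rule: finite_induct)
  case empty then show ?case by (intro exI[of _ 1]) auto
next
  case (insert \<theta> \<Theta>)
  then obtain \<rho> where "\<rho> > 0" "\<forall>\<theta>\<in>\<Theta>. \<rho> \<le> \<bar>\<theta> - c\<bar>" by auto
  then show ?case using insert by (intro exI[of _ "min \<rho> \<bar>\<theta> - c\<bar>"]) auto
qed

lemma local_at:
  fixes S :: "real \<Rightarrow> rigged"
  assumes H1: "\<forall>r\<in>{0..1}. good (S r)"
    and H2: "\<forall>r\<in>{0..1}. \<forall>e>0. \<exists>\<delta>>0. \<forall>r'\<in>{0..1}. \<bar>r' - r\<bar> < \<delta> \<longrightarrow> close (S r') (S r) e"
    and r0: "r0 \<in> {0..1}"
  shows "\<exists>\<delta>>0. \<forall>I. I \<subseteq> {0..1} \<inter> ball r0 \<delta> \<longrightarrow> (\<exists>z. ENUM S I z)"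
proof -
  define P where "P = {x \<in> circle. S r0 x \<noteq> 0 \<and> pi/2 \<le> th x \<and> th x \<le> 3*pi/2}"
  have fP: "finite P" unfolding P_def using H1 r0 pi_gt_zero by (intro good_fin) auto
  have "infinite {3*pi/4..5*pi/4}" using pi_gt_zero by simp
  then obtain c where c: "c \<in> {3*pi/4..5*pi/4}" "c \<notin> th ` P"
  proof -
    have "\<not> {3*pi/4..5*pi/4} \<subseteq> th ` P"
      using finite_imageI[OF fP, of th] \<open>infinite {3*pi/4..5*pi/4}\<close> finite_subset by blast
    then show ?thesis using that by blast
  qed
  obtain \<rho> where \<rho>: "\<rho> > 0" "\<forall>\<theta>\<in>th ` P. \<rho> \<le> \<bar>\<theta> - c\<bar>"
    using gap_mid[OF finite_imageI[OF fP] c(2)] by blast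
  have cb: "3*pi/4 \<le> c" "c \<le> 5*pi/4" using c(1) by auto
  define w0 where "w0 = min (pi/16) (\<rho>/4)"
  have w0: "0 < w0" "w0 \<le> pi/16" "4 * w0 \<le> \<rho>" using \<rho> pi_gt_zero by (auto simp: w0_def)
  have win0: "S r0 y = 0" if y: "y \<in> circle" "y \<noteq> 1" "\<bar>th y - c\<bar> < 4*w0" for y
  proof (rule ccontr)
    assume "S r0 y \<noteq> 0"
    moreover have "th y - c < 4*w0" "c - th y < 4*w0" using y(3) by linarith+
    then have "pi/2 \<le> th y" "th y \<le> 3*pi/2" using cb w0 by linarith+
    ultimately have "y \<in> P" using y by (simp add: P_def)
    then have "\<rho> \<le> \<bar>th y - c\<bar>" using \<rho>(2) by blast
    then show False using y(3) w0 by linarith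
  qed
  obtain \<delta> where \<delta>: "\<delta> > 0" "\<forall>r'\<in>{0..1}. \<bar>r' - r0\<bar> < \<delta> \<longrightarrow> close (S r') (S r0) w0"
    using H2 r0 w0 by blast
  have win: "S r y = 0" if r: "r \<in> {0..1}" "\<bar>r - r0\<bar> < \<delta>" and y: "y \<in> circle" "y \<noteq> 1" "\<bar>th y - c\<bar> < 3*w0" for r y
  proof (rule ccontr)
    assume Sy: "S r y \<noteq> 0"
    have cl: "close (S r) (S r0) w0" using \<delta> r by blast
    obtain y' where y': "S r0 y' \<noteq> 0" "arcdist y y' < w0" using close_match[OF cl Sy] by blast
    have y'c: "y' \<in> circle" using good_circle H1 r0 y'(1) by blast
    have "\<bar>th y - th y'\<bar> < w0 \<or> \<bar>th y - th y' - 2*pi\<bar> < w0 \<or> \<bar>th y - th y' + 2*pi\<bar> < w0"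
      using arcdist_th[OF y(1) y'c y'(2)] w0 pi_gt_zero by linarith
    moreover have "0 < th y'" "th y' \<le> 2*pi" by (rule th_pos, rule th_le)
    ultimately have d: "\<bar>th y - th y'\<bar> < w0" using y cb w0 pi_gt_zero by linarith
    then have "th y' < 2*pi" using y cb w0 by linarith
    then have "y' \<noteq> 1" using th_1 by auto
    moreover have "\<bar>th y' - c\<bar> < 4*w0" using d y by linarith
    ultimately show False using win0 y'c y' by blast
  qed
  show ?thesis
  proof (intro exI[of _ \<delta>] conjI allI impI)
    show "\<delta> > 0" by fact
    fix I assume I: "I \<subseteq> {0..1} \<inter> ball r0 \<delta>"
    have Ir: "r \<in> {0..1}" "\<bar>r - r0\<bar> < \<delta>" if "r \<in> I" for r
      using I that by (auto simp: dist_real_def abs_minus_commute)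
    have "\<exists>z. (\<forall>j. continuous_on I (z j)) \<and> (\<forall>r\<in>I. enumeration (S r) (\<lambda>j. z j r))"
    proof (rule local_family[where c = c and w = "3*w0"])
      show "\<forall>r\<in>I. good (S r)" using H1 Ir by blast
      show "\<forall>r\<in>I. \<forall>y\<in>circle. y \<noteq> 1 \<longrightarrow> \<bar>th y - c\<bar> < 3*w0 \<longrightarrow> S r y = 0"
      proof (intro ballI impI)
        fix r y assume a: "r \<in> I" "y \<in> circle" "y \<noteq> 1" "\<bar>th y - c\<bar> < 3*w0"
        show "S r y = 0" by (rule win[OF Ir(1)[OF a(1)] Ir(2)[OF a(1)] a(2) a(3) a(4)])
      qed
      show "\<forall>r\<in>I. \<forall>e>0. \<exists>\<delta>>0. \<forall>r'\<in>I. \<bar>r' - r\<bar> < \<delta> \<longrightarrow> close (S r') (S r) e"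
      proof (intro ballI allI impI)
        fix r e assume r: "r \<in> I" and e: "(e::real) > 0"
        obtain d where d: "d > 0" "\<forall>r'\<in>{0..1}. \<bar>r' - r\<bar> < d \<longrightarrow> close (S r') (S r) e"
          using H2 Ir(1)[OF r] e by blast
        show "\<exists>\<delta>>0. \<forall>r'\<in>I. \<bar>r' - r\<bar> < \<delta> \<longrightarrow> close (S r') (S r) e"
          using d Ir by blast
      qed
      show "0 < 3*w0" "3*w0 \<le> c" "c + 3*w0 \<le> 2*pi" "3*w0 \<le> pi" using w0 cb pi_gt_zero by auto
    qed
    then show "\<exists>z. ENUM S I z" by (simp add: ENUM_def)
  qed
qed



theorem mainTheorem4:
  fixes S :: "real \<Rightarrow> rigged"
  assumes "\<forall>r \<in> {0..1}. S r \<in> S_one"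
    and "\<forall>r \<in> {0..1}. \<forall>e>0. \<exists>\<delta>>0. \<forall>r' \<in> {0..1}. \<bar>r' - r\<bar> < \<delta> \<longrightarrow> rdist (S r') (S r) < ennreal e"
    and "S 0 = one_rigged"
  shows "\<exists>z :: nat \<Rightarrow> real \<Rightarrow> complex.
           (\<forall>j. continuous_on {0..1} (z j) \<and> z j ` {0..1} \<subseteq> circle \<and> z j 0 = 1)
         \<and> (\<forall>r \<in> {0..1}. enumeration (S r) (\<lambda>j. z j r))"
proof -
  have H1: "\<forall>r\<in>{0..1}. good (S r)"
    using assms(1) S_inf_good by (auto simp: S_one_def)
  have H2: "\<forall>r\<in>{0..1}. \<forall>e>0. \<exists>\<delta>>0. \<forall>r'\<in>{0..1}. \<bar>r' - r\<bar> < \<delta> \<longrightarrow> close (S r') (S r) e"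
  proof (intro ballI allI impI)
    fix r e assume r: "r \<in> {0..1::real}" and e: "(e::real) > 0"
    obtain d where d: "d > 0" "\<forall>r' \<in> {0..1}. \<bar>r' - r\<bar> < d \<longrightarrow> rdist (S r') (S r) < ennreal e"
      using assms(2) r e by blast
    show "\<exists>\<delta>>0. \<forall>r'\<in>{0..1}. \<bar>r' - r\<bar> < \<delta> \<longrightarrow> close (S r') (S r) e"
      using d rdist_close by blast
  qed
  have "\<forall>r0\<in>{0..1}. \<exists>\<delta>>0. \<forall>I. I \<subseteq> {0..1} \<inter> ball r0 \<delta> \<longrightarrow> (\<exists>z. ENUM S I z)"
    using local_at[OF H1 H2] by blast
  then obtain df where df: "\<And>r0. r0 \<in> {0..1} \<Longrightarrow> df r0 > 0 \<and>
      (\<forall>I. I \<subseteq> {0..1} \<inter> ball r0 (df r0) \<longrightarrow> (\<exists>z. ENUM S I z))"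
    by metis
  have cov: "{0..1::real} \<subseteq> \<Union>((\<lambda>r0. ball r0 (df r0)) ` {0..1})"
    using df by force
  obtain \<epsilon> where \<epsilon>: "\<epsilon> > 0" "\<And>x. x \<in> {0..1::real} \<Longrightarrow> \<exists>G \<in> (\<lambda>r0. ball r0 (df r0)) ` {0..1}. ball x \<epsilon> \<subseteq> G"
    using Heine_Borel_lemma[OF compact_Icc cov] by blast
  have loc: "\<exists>z. ENUM S {a..b} z" if ab: "0 \<le> a" "a \<le> b" "b \<le> 1" "b - a < \<epsilon>" for a b
  proof -
    obtain r0 where r0: "r0 \<in> {0..1}" "ball a \<epsilon> \<subseteq> ball r0 (df r0)" using \<epsilon>(2)[of a] ab by auto
    have "{a..b} \<subseteq> {0..1} \<inter> ball r0 (df r0)"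
    proof
      fix x assume "x \<in> {a..b}"
      then have "x \<in> ball a \<epsilon>" "x \<in> {0..1}" using ab by (auto simp: dist_real_def)
      then show "x \<in> {0..1} \<inter> ball r0 (df r0)" using r0 by blast
    qed
    then show ?thesis using df[OF r0(1)] by blast
  qed
  have ind: "\<exists>z. ENUM S {0..min 1 (real n * \<epsilon> / 2)} z" for n
  proof (induction n)
    case 0
    show ?case using loc[of 0 0] \<epsilon> by simp
  next
    case (Suc n)
    define b where "b = min 1 (real n * \<epsilon> / 2)"
    define b' where "b' = min 1 (real (Suc n) * \<epsilon> / 2)"
    have bb: "0 \<le> b" "b \<le> b'" "b' \<le> 1" "b' - b < \<epsilon>" using \<epsilon>
      by (auto simp: b_def b'_def min_def field_simps)
    obtain z where z: "ENUM S {0..b} z" using Suc b_def by blast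
    obtain w where w: "ENUM S {b..b'} w" using loc[OF bb(1) bb(2) bb(3) bb(4)] by blast
    show ?case using glue[OF z w bb(1) bb(2)] b'_def by simp
  qed
  obtain n :: nat where n: "real n > 2 / \<epsilon>" using reals_Archimedean2 by blast
  have "real n * \<epsilon> / 2 \<ge> 1" using n \<epsilon> by (simp add: field_simps)
  then have "min 1 (real n * \<epsilon> / 2) = 1" by simp
  then obtain z where z: "ENUM S {0..1} z" using ind[of n] by metis
  have en: "enumeration (S r) (\<lambda>j. z j r)" if "r \<in> {0..1}" for r using z that by (simp add: ENUM_def)
  show ?thesis
  proof (intro exI[of _ z] conjI allI ballI)
    fix j
    show "continuous_on {0..1} (z j)" using z by (simp add: ENUM_def)
    show "z j ` {0..1} \<subseteq> circle"
    proof
      fix y assume "y \<in> z j ` {0..1}"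
      then obtain r where r: "r \<in> {0..1}" "y = z j r" by blast
      have "S r (z j r) \<noteq> 0" using enum_hit[OF en[OF r(1)]] .
      then show "y \<in> circle" using good_circle H1 r by blast
    qed
    have "S 0 (z j 0) \<noteq> 0" using enum_hit[OF en[of 0]] by simp
    then show "z j 0 = 1" using assms(3) by (simp add: one_rigged_def split: if_splits)
  next
    fix r :: real assume "r \<in> {0..1}" then show "enumeration (S r) (\<lambda>j. z j r)" by (rule en)
  qed
qed

end
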